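(* Let $N\ge 1$. Inside $S^{N-1}_{\mathbb R,+}$ the following equalities hold: $$S^{N-1}_{\mathbb R}\cap\bar S^{N-1}_{\mathbb R}=S^{N-1,0}_{\mathbb R},\qquad S^{N-1}_{\mathbb R}\cap\bar S^{N-1}_{\mathbb R,*}=S^{N-1,1}_{\mathbb R},$$ $$S^{N-1}_{\mathbb R,*}\cap\bar S^{N-1}_{\mathbb R}=\bar S^{N-1,1}_{\mathbb R},\qquad S^{N-1}_{\mathbb R,*}\cap\bar S^{N-1}_{\mathbb R,*}=S^{N-1,1}_{\mathbb R,*}.$$ Moreover one has the inclusions $S^{N-1,0}_{\mathbb R}\subset S^{N-1,1}_{\mathbb R}\subset S^{N-1}_{\mathbb R}$, $S^{N-1,0}_{\mathbb R}\subset\bar S^{N-1,1}_{\mathbb R}\subset\bar S^{N-1}_{\mathbb R}$, $\bar S^{N-1,1}_{\mathbb R}\subset S^{N-1,1}_{\mathbb R,*}\subset S^{N-1}_{\mathbb R,*}$, $S^{N-1,1}_{\mathbb R}\subset S^{N-1,1}_{\mathbb R,*}\subset\bar S^{N-1}_{\mathbb R,*}$, $\bar S^{N-1}_{\mathbb R}\subset\bar S^{N-1}_{\mathbb R,*}\subset S^{N-1}_{\mathbb R,+}$ and $S^{N-1}_{\mathbb R}\subset S^{N-1}_{\mathbb R,*}\subset S^{N-1}_{\mathbb R,+}$.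
   Context: $C(S^{N-1}_{\mathbb R,+})$ denotes the universal $C^*$-algebra generated by self-adjoint elements $x_1,\dots,x_N$ subject to $\sum_i x_i^2=1$. A noncommutative subspace $X\subset S^{N-1}_{\mathbb R,+}$ is given by a quotient $C(X)$ of $C(S^{N-1}_{\mathbb R,+})$ by relations among the standard coordinates $x_i$; $X\subset Y$ means $C(X)$ is a quotient of $C(Y)$ compatibly with the $x_i$, and $X\cap Y$ is obtained by imposing both sets of relations. Subspheres: $S^{N-1}_{\mathbb R}$: $x_ix_j=x_jx_i$ for all $i,j$ (the usual sphere); $\bar S^{N-1}_{\mathbb R}$: $x_ix_j=-x_jx_i$ for all $i\ne j$; $S^{N-1}_{\mathbb R,*}$: $x_ix_jx_k=x_kx_jx_i$ for all $i,j,k$; $\bar S^{N-1}_{\mathbb R,*}$: $x_ix_jx_k=-x_kx_jx_i$ for $i,j,k$ pairwise distinct and $x_ix_jx_k=x_kx_jx_i$ otherwise. For $d\in\{1,\dots,N\}$, the polygonal versions $S^{N-1,d-1}_{\mathbb R}$, $\bar S^{N-1,d-1}_{\mathbb R}$, $S^{N-1,d-1}_{\mathbb R,*}$, $\bar S^{N-1,d-1}_{\mathbb R,*}$, $S^{N-1,d-1}_{\mathbb R,+}$ are obtained from $S^{N-1}_{\mathbb R}$, $\bar S^{N-1}_{\mathbb R}$, $S^{N-1}_{\mathbb R,*}$, $\bar S^{N-1}_{\mathbb R,*}$, $S^{N-1}_{\mathbb R,+}$ respectively by additionally imposing $x_{i_0}x_{i_1}\cdots x_{i_d}=0$ for all pairwise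 distinct $i_0,\dots,i_d$ (vacuous when $d=N$). *)

theory Defs
  imports Complex_Main
begin

text \<open>Unital C*-algebras, rendered as a predicate on the operations of a real Banach algebra
  type 'a: a complex scalar multiplication extending the real one, and an involution star.\<close>

definition cstar_algebra ::
  "(complex \<Rightarrow> 'a::{real_normed_algebra_1,banach} \<Rightarrow> 'a) \<Rightarrow> ('a \<Rightarrow> 'a) \<Rightarrow> bool" where
  "cstar_algebra scC star \<longleftrightarrow>
     (\<forall>r a. scC (complex_of_real r) a = scaleR r a) \<and>
     (\<forall>c d a. scC (c + d) a = scC c a + scC d a) \<and>
     (\<forall>c a b. scC c (a + b) = scC c a + scC c b) \<and>
     (\<forall>c d a. scC c (scC d a) = scC (c * d) a) \<and>
     (\<forall>c a b. scC c (a * b) = scC c a * b \<and> scC c (a * b) = a * scC c b) \<and>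
     (\<forall>c a. norm (scC c a) = cmod c * norm a) \<and>
     (\<forall>a. star (star a) = a) \<and>
     (\<forall>a b. star (a + b) = star a + star b) \<and>
     (\<forall>c a. star (scC c a) = scC (cnj c) (star a)) \<and>
     (\<forall>a b. star (a * b) = star b * star a) \<and>
     (\<forall>a. norm (star a * a) = (norm a)\<^sup>2)"

definition sphere_plus :: "('a::ring_1 \<Rightarrow> 'a) \<Rightarrow> nat \<Rightarrow> (nat \<Rightarrow> 'a) \<Rightarrow> bool" where
  "sphere_plus star N x \<longleftrightarrow> (\<forall>i<N. star (x i) = x i) \<and> (\<Sum>i<N. x i * x i) = 1"

definition rel_comm :: "nat \<Rightarrow> (nat \<Rightarrow> 'a::ring_1) \<Rightarrow> bool" where
  "rel_comm N x \<longleftrightarrow> (\<forall>i<N. \<forall>j<N. x i * x j = x j * x i)"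

definition rel_anticomm :: "nat \<Rightarrow> (nat \<Rightarrow> 'a::ring_1) \<Rightarrow> bool" where
  "rel_anticomm N x \<longleftrightarrow> (\<forall>i<N. \<forall>j<N. i \<noteq> j \<longrightarrow> x i * x j = - (x j * x i))"

definition rel_halfcomm :: "nat \<Rightarrow> (nat \<Rightarrow> 'a::ring_1) \<Rightarrow> bool" where
  "rel_halfcomm N x \<longleftrightarrow> (\<forall>i<N. \<forall>j<N. \<forall>k<N. x i * x j * x k = x k * x j * x i)"

definition rel_halfanti :: "nat \<Rightarrow> (nat \<Rightarrow> 'a::ring_1) \<Rightarrow> bool" where
  "rel_halfanti N x \<longleftrightarrow> (\<forall>i<N. \<forall>j<N. \<forall>k<N.
     (if i \<noteq> j \<and> j \<noteq> k \<and> i \<noteq> k then x i * x j * x k = - (x k * x j * x i)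
      else x i * x j * x k = x k * x j * x i))"

definition rel_vanish :: "nat \<Rightarrow> nat \<Rightarrow> (nat \<Rightarrow> 'a::ring_1) \<Rightarrow> bool" where
  "rel_vanish N d x \<longleftrightarrow> (\<forall>f::nat \<Rightarrow> nat. (\<forall>m\<le>d. f m < N) \<and> inj_on f {0..d} \<longrightarrow>
       prod_list (map (\<lambda>m. x (f m)) [0..<Suc d]) = 0)"

definition S_R :: "nat \<Rightarrow> (nat \<Rightarrow> 'a::ring_1) \<Rightarrow> bool" where
  "S_R N x \<longleftrightarrow> rel_comm N x"
definition Sbar_R :: "nat \<Rightarrow> (nat \<Rightarrow> 'a::ring_1) \<Rightarrow> bool" where
  "Sbar_R N x \<longleftrightarrow> rel_anticomm N x"
definition S_Rstar :: "nat \<Rightarrow> (nat \<Rightarrow> 'a::ring_1) \<Rightarrow> bool" where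
  "S_Rstar N x \<longleftrightarrow> rel_halfcomm N x"
definition Sbar_Rstar :: "nat \<Rightarrow> (nat \<Rightarrow> 'a::ring_1) \<Rightarrow> bool" where
  "Sbar_Rstar N x \<longleftrightarrow> rel_halfanti N x"

text \<open>Polygonal versions: the paper's S^{N-1,d-1} is written with parameter d.\<close>
definition S_R_poly :: "nat \<Rightarrow> nat \<Rightarrow> (nat \<Rightarrow> 'a::ring_1) \<Rightarrow> bool" where
  "S_R_poly N d x \<longleftrightarrow> rel_comm N x \<and> rel_vanish N d x"
definition Sbar_R_poly :: "nat \<Rightarrow> nat \<Rightarrow> (nat \<Rightarrow> 'a::ring_1) \<Rightarrow> bool" where
  "Sbar_R_poly N d x \<longleftrightarrow> rel_anticomm N x \<and> rel_vanish N d x"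
definition S_Rstar_poly :: "nat \<Rightarrow> nat \<Rightarrow> (nat \<Rightarrow> 'a::ring_1) \<Rightarrow> bool" where
  "S_Rstar_poly N d x \<longleftrightarrow> rel_halfcomm N x \<and> rel_vanish N d x"

end

theory Submission
  imports Defs
begin

lemma half_zero:
  fixes a :: "'a::real_vector"
  assumes "a = - a" shows "a = 0"
proof -
  have "scaleR 2 a = 0" using assms by (metis add.right_inverse scaleR_2)
  then show ?thesis by simp
qed

lemma upt3: "prod_list (map (g::nat \<Rightarrow> 'a::monoid_mult) [0..<Suc 2]) = g 0 * g 1 * g 2"
  by (simp add: upt_rec mult.assoc numeral_2_eq_2)
lemma upt2: "prod_list (map (g::nat \<Rightarrow> 'a::monoid_mult) [0..<Suc 1]) = g 0 * g 1"
  by (simp add: upt_rec)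

lemma vanish1_iff:
  "rel_vanish N 1 x \<longleftrightarrow> (\<forall>i<N. \<forall>j<N. i \<noteq> j \<longrightarrow> x i * x j = 0)"
proof
  assume H: "rel_vanish N 1 x"
  show "\<forall>i<N. \<forall>j<N. i \<noteq> j \<longrightarrow> x i * x j = 0"
  proof (intro allI impI)
    fix i j assume a: "i < N" "j < N" "i \<noteq> j"
    define f where "f = (\<lambda>m::nat. if m = 0 then i else j)"
    have "(\<forall>m\<le>1. f m < N) \<and> inj_on f {0..1}"
      using a unfolding f_def inj_on_def by auto
    with H have "prod_list (map (\<lambda>m. x (f m)) [0..<Suc 1]) = 0"
      unfolding rel_vanish_def by blast
    then show "x i * x j = 0" unfolding upt2 by (simp add: f_def)
  qed
next
  assume H: "\<forall>i<N. \<forall>j<N. i \<noteq> j \<longrightarrow> x i * x j = 0"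
  show "rel_vanish N 1 x" unfolding rel_vanish_def
  proof (intro allI impI)
    fix f :: "nat \<Rightarrow> nat" assume a: "(\<forall>m\<le>1. f m < N) \<and> inj_on f {0..1}"
    then have "f 0 \<noteq> f 1" "f 0 < N" "f 1 < N" using inj_onD[of f "{0..1}" 0 1] by auto
    then have "x (f 0) * x (f 1) = 0" using H by blast
    then show "prod_list (map (\<lambda>m. x (f m)) [0..<Suc 1]) = 0" unfolding upt2 by simp
  qed
qed

lemma vanish2_iff:
  "rel_vanish N 2 x \<longleftrightarrow> (\<forall>i<N. \<forall>j<N. \<forall>k<N. i \<noteq> j \<and> j \<noteq> k \<and> i \<noteq> k \<longrightarrow> x i * x j * x k = 0)"
proof
  assume H: "rel_vanish N 2 x"
  show "\<forall>i<N. \<forall>j<N. \<forall>k<N. i \<noteq> j \<and> j \<noteq> k \<and> i \<noteq> k \<longrightarrow> x i * x j * x k = 0"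
  proof (intro allI impI)
    fix i j k assume a: "i < N" "j < N" "k < N" "i \<noteq> j \<and> j \<noteq> k \<and> i \<noteq> k"
    define f where "f = (\<lambda>m::nat. if m = 0 then i else if m = 1 then j else k)"
    have "(\<forall>m\<le>2. f m < N) \<and> inj_on f {0..2}"
      using a unfolding f_def inj_on_def by auto
    with H have "prod_list (map (\<lambda>m. x (f m)) [0..<Suc 2]) = 0"
      unfolding rel_vanish_def by blast
    then show "x i * x j * x k = 0" unfolding upt3 by (simp add: f_def)
  qed
next
  assume H: "\<forall>i<N. \<forall>j<N. \<forall>k<N. i \<noteq> j \<and> j \<noteq> k \<and> i \<noteq> k \<longrightarrow> x i * x j * x k = 0"
  show "rel_vanish N 2 x" unfolding rel_vanish_def
  proof (intro allI impI)
    fix f :: "nat \<Rightarrow> nat" assume a: "(\<forall>m\<le>2. f m < N) \<and> inj_on f {0..2}"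
    then have "f 0 \<noteq> f 1 \<and> f 1 \<noteq> f 2 \<and> f 0 \<noteq> f 2" "f 0 < N" "f 1 < N" "f 2 < N"
      using inj_onD[of f "{0..2}" 0 1] inj_onD[of f "{0..2}" 1 2] inj_onD[of f "{0..2}" 0 2] by auto
    then have "x (f 0) * x (f 1) * x (f 2) = 0" using H by blast
    then show "prod_list (map (\<lambda>m. x (f m)) [0..<Suc 2]) = 0" unfolding upt3 by simp
  qed
qed

lemma anti_half:
  fixes x :: "nat \<Rightarrow> 'a::real_algebra_1"
  assumes "rel_anticomm N x"
  shows "rel_halfcomm N x \<longleftrightarrow> rel_vanish N 2 x"
proof -
  have A: "\<And>i j. i < N \<Longrightarrow> j < N \<Longrightarrow> i \<noteq> j \<Longrightarrow> x i * x j = - (x j * x i)"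
    using assms unfolding rel_anticomm_def by blast
  have sw: "x i * x j * x k = - (x k * x j * x i)"
    if "i < N" "j < N" "k < N" "i \<noteq> j \<and> j \<noteq> k \<and> i \<noteq> k" for i j k
  proof -
    have e1: "x i * x j = - (x j * x i)" using A[of i j] that by blast
    have e2: "x i * x k = - (x k * x i)" using A[of i k] that by blast
    have e3: "x j * x k = - (x k * x j)" using A[of j k] that by blast
    have "x i * x j * x k = - (x j * x i) * x k" using e1 by simp
    also have "\<dots> = - (x j * (x i * x k))" by (simp add: mult.assoc)
    also have "\<dots> = - (x j * (- (x k * x i)))" using e2 by simp
    also have "\<dots> = (x j * x k) * x i" by (simp add: mult.assoc)
    also have "\<dots> = (- (x k * x j)) * x i" using e3 by simp
    also have "\<dots> = - (x k * x j * x i)" by simp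
    finally show ?thesis .
  qed
  have nd: "x i * x j * x k = x k * x j * x i"
    if "i < N" "j < N" "k < N" and ndp: "\<not> (i \<noteq> j \<and> j \<noteq> k \<and> i \<noteq> k)" for i j k
  proof -
    note th = that
    consider "i = k" | "i = j" "i \<noteq> k" | "j = k" "i \<noteq> k" using ndp by auto
    then show ?thesis
    proof cases
      case 1 then show ?thesis by simp
    next
      case 2
      have e: "x i * x k = - (x k * x i)" using A[of i k] that 2 by blast
      have "x i * x i * x k = x i * (x i * x k)" by (simp add: mult.assoc)
      also have "\<dots> = x i * (- (x k * x i))" by (subst e) (rule refl)
      also have "\<dots> = - (x i * x k * x i)" by (simp add: mult.assoc)
      also have "\<dots> = x k * x i * x i" by (subst e) simp
      finally show ?thesis using 2 by simp
    next
      case 3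
      have e: "x i * x k = - (x k * x i)" using A[of i k] that 3 by blast
      have "x i * x k * x k = - (x k * x i * x k)" using e by simp
      also have "\<dots> = - (x k * (x i * x k))" by (simp add: mult.assoc)
      also have "\<dots> = - (x k * (- (x k * x i)))" by (subst e) (rule refl)
      also have "\<dots> = x k * x k * x i" by (simp add: mult.assoc)
      finally show ?thesis using 3 by simp
    qed
  qed
  show ?thesis
  proof
    assume "rel_halfcomm N x"
    then have "\<forall>i<N. \<forall>j<N. \<forall>k<N. i \<noteq> j \<and> j \<noteq> k \<and> i \<noteq> k \<longrightarrow> x i * x j * x k = 0"
      using sw half_zero unfolding rel_halfcomm_def by metis
    then show "rel_vanish N 2 x" using vanish2_iff by blast
  next
    assume "rel_vanish N 2 x"
    then have "\<forall>i<N. \<forall>j<N. \<forall>k<N. i \<noteq> j \<and> j \<noteq> k \<and> i \<noteq> k \<longrightarrow> x i * x j * x k = 0"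
      using vanish2_iff by blast
    then show "rel_halfcomm N x" unfolding rel_halfcomm_def using sw nd by (metis minus_zero)
  qed
qed


lemma comm_half:
  fixes x :: "nat \<Rightarrow> 'a::ring_1"
  assumes "rel_comm N x" shows "rel_halfcomm N x"
  unfolding rel_halfcomm_def
proof (intro allI impI)
  fix i j k assume a: "i < N" "j < N" "k < N"
  have c: "\<And>p q. p < N \<Longrightarrow> q < N \<Longrightarrow> x p * x q = x q * x p"
    using assms unfolding rel_comm_def by blast
  have "x i * x j * x k = x j * x i * x k" using c[of i j] a by simp
  also have "\<dots> = x j * (x i * x k)" by (simp add: mult.assoc)
  also have "\<dots> = x j * (x k * x i)" using c[of i k] a by simp
  also have "\<dots> = (x j * x k) * x i" by (simp add: mult.assoc)
  also have "\<dots> = x k * x j * x i" using c[of j k] a by simp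
  finally show "x i * x j * x k = x k * x j * x i" .
qed

lemma halfcomm_vanish_anti:
  fixes x :: "nat \<Rightarrow> 'a::ring_1"
  assumes "rel_halfcomm N x" "rel_vanish N 2 x" shows "rel_halfanti N x"
  using assms unfolding rel_halfanti_def rel_halfcomm_def vanish2_iff by (simp add: if_split)

lemma halfcomm_halfanti_vanish:
  fixes x :: "nat \<Rightarrow> 'a::real_algebra_1"
  assumes "rel_halfcomm N x" "rel_halfanti N x" shows "rel_vanish N 2 x"
  unfolding vanish2_iff
proof (intro allI impI)
  fix i j k assume a: "i < N" "j < N" "k < N" "i \<noteq> j \<and> j \<noteq> k \<and> i \<noteq> k"
  have "x i * x j * x k = - (x k * x j * x i)" using assms(2) a unfolding rel_halfanti_def by metis
  moreover have "x i * x j * x k = x k * x j * x i" using assms(1) a unfolding rel_halfcomm_def by blast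
  ultimately show "x i * x j * x k = 0" using half_zero by metis
qed

lemma comm_anti_vanish:
  fixes x :: "nat \<Rightarrow> 'a::real_algebra_1"
  assumes "rel_comm N x" "rel_anticomm N x" shows "rel_vanish N 1 x"
  unfolding vanish1_iff
proof (intro allI impI)
  fix i j assume a: "i < N" "j < N" "i \<noteq> j"
  have "x i * x j = - (x j * x i)" using assms(2) a unfolding rel_anticomm_def by blast
  moreover have "x i * x j = x j * x i" using assms(1) a unfolding rel_comm_def by blast
  ultimately show "x i * x j = 0" using half_zero by metis
qed

lemma vanish_anti:
  fixes x :: "nat \<Rightarrow> 'a::ring_1"
  assumes "rel_vanish N 1 x" shows "rel_anticomm N x"
  using assms unfolding vanish1_iff rel_anticomm_def by simp

lemma vanish12:
  fixes x :: "nat \<Rightarrow> 'a::ring_1"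
  assumes "rel_vanish N 1 x" shows "rel_vanish N 2 x"
  using assms unfolding vanish1_iff vanish2_iff by simp

lemma anti_halfanti:
  fixes x :: "nat \<Rightarrow> 'a::real_algebra_1"
  assumes "rel_anticomm N x" shows "rel_halfanti N x"
proof -
  have A: "\<And>i j. i < N \<Longrightarrow> j < N \<Longrightarrow> i \<noteq> j \<Longrightarrow> x i * x j = - (x j * x i)"
    using assms unfolding rel_anticomm_def by blast
  have sw: "x i * x j * x k = - (x k * x j * x i)"
    if "i < N" "j < N" "k < N" "i \<noteq> j \<and> j \<noteq> k \<and> i \<noteq> k" for i j k
  proof -
    have e1: "x i * x j = - (x j * x i)" using A[of i j] that by blast
    have e2: "x i * x k = - (x k * x i)" using A[of i k] that by blast
    have e3: "x j * x k = - (x k * x j)" using A[of j k] that by blast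
    have "x i * x j * x k = - (x j * x i) * x k" using e1 by simp
    also have "\<dots> = - (x j * (x i * x k))" by (simp add: mult.assoc)
    also have "\<dots> = - (x j * (- (x k * x i)))" using e2 by simp
    also have "\<dots> = (x j * x k) * x i" by (simp add: mult.assoc)
    also have "\<dots> = (- (x k * x j)) * x i" using e3 by simp
    also have "\<dots> = - (x k * x j * x i)" by simp
    finally show ?thesis .
  qed
  have nd: "x i * x j * x k = x k * x j * x i"
    if "i < N" "j < N" "k < N" and ndp: "\<not> (i \<noteq> j \<and> j \<noteq> k \<and> i \<noteq> k)" for i j k
  proof -
    note th = that
    consider "i = k" | "i = j" "i \<noteq> k" | "j = k" "i \<noteq> k" using ndp by auto
    then show ?thesis
    proof cases
      case 1 then show ?thesis by simp
    next
      case 2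
      have e: "x i * x k = - (x k * x i)" using A[of i k] that 2 by blast
      have "x i * x i * x k = x i * (x i * x k)" by (simp add: mult.assoc)
      also have "\<dots> = x i * (- (x k * x i))" by (subst e) (rule refl)
      also have "\<dots> = - (x i * x k * x i)" by (simp add: mult.assoc)
      also have "\<dots> = x k * x i * x i" by (subst e) simp
      finally show ?thesis using 2 by simp
    next
      case 3
      have e: "x i * x k = - (x k * x i)" using A[of i k] that 3 by blast
      have "x i * x k * x k = - (x k * x i * x k)" using e by simp
      also have "\<dots> = - (x k * (x i * x k))" by (simp add: mult.assoc)
      also have "\<dots> = - (x k * (- (x k * x i)))" by (subst e) (rule refl)
      also have "\<dots> = x k * x k * x i" by (simp add: mult.assoc)
      finally show ?thesis using 3 by simp
    qed
  qed
  show ?thesis unfolding rel_halfanti_def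
  proof (intro allI impI)
    fix i j k assume "i < N" "j < N" "k < N"
    then show "if i \<noteq> j \<and> j \<noteq> k \<and> i \<noteq> k then x i * x j * x k = - (x k * x j * x i)
      else x i * x j * x k = x k * x j * x i"
      using sw[of i j k] nd[of i j k]
      unfolding if_bool_eq_conj by blast
  qed
qed

theorem proposition1p2:
  fixes scC :: "complex \<Rightarrow> 'a::{real_normed_algebra_1,banach} \<Rightarrow> 'a"
    and star :: "'a \<Rightarrow> 'a"
    and N :: nat
  assumes "N \<ge> 1"
    and "cstar_algebra scC star"
  shows
    "\<forall>x. sphere_plus star N x \<longrightarrow>
       ((S_R N x \<and> Sbar_R N x) \<longleftrightarrow> S_R_poly N 1 x) \<and>
       ((S_R N x \<and> Sbar_Rstar N x) \<longleftrightarrow> S_R_poly N 2 x) \<and>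
       ((S_Rstar N x \<and> Sbar_R N x) \<longleftrightarrow> Sbar_R_poly N 2 x) \<and>
       ((S_Rstar N x \<and> Sbar_Rstar N x) \<longleftrightarrow> S_Rstar_poly N 2 x) \<and>
       (S_R_poly N 1 x \<longrightarrow> S_R_poly N 2 x) \<and> (S_R_poly N 2 x \<longrightarrow> S_R N x) \<and>
       (S_R_poly N 1 x \<longrightarrow> Sbar_R_poly N 2 x) \<and> (Sbar_R_poly N 2 x \<longrightarrow> Sbar_R N x) \<and>
       (Sbar_R_poly N 2 x \<longrightarrow> S_Rstar_poly N 2 x) \<and> (S_Rstar_poly N 2 x \<longrightarrow> S_Rstar N x) \<and>
       (S_R_poly N 2 x \<longrightarrow> S_Rstar_poly N 2 x) \<and> (S_Rstar_poly N 2 x \<longrightarrow> Sbar_Rstar N x) \<and>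
       (Sbar_R N x \<longrightarrow> Sbar_Rstar N x) \<and> (S_R N x \<longrightarrow> S_Rstar N x)"
proof (intro allI impI)
  fix x :: "nat \<Rightarrow> 'a"
  note defs = S_R_def Sbar_R_def S_Rstar_def Sbar_Rstar_def S_R_poly_def Sbar_R_poly_def S_Rstar_poly_def
  show "((S_R N x \<and> Sbar_R N x) \<longleftrightarrow> S_R_poly N 1 x) \<and>
       ((S_R N x \<and> Sbar_Rstar N x) \<longleftrightarrow> S_R_poly N 2 x) \<and>
       ((S_Rstar N x \<and> Sbar_R N x) \<longleftrightarrow> Sbar_R_poly N 2 x) \<and>
       ((S_Rstar N x \<and> Sbar_Rstar N x) \<longleftrightarrow> S_Rstar_poly N 2 x) \<and>
       (S_R_poly N 1 x \<longrightarrow> S_R_poly N 2 x) \<and> (S_R_poly N 2 x \<longrightarrow> S_R N x) \<and>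
       (S_R_poly N 1 x \<longrightarrow> Sbar_R_poly N 2 x) \<and> (Sbar_R_poly N 2 x \<longrightarrow> Sbar_R N x) \<and>
       (Sbar_R_poly N 2 x \<longrightarrow> S_Rstar_poly N 2 x) \<and> (S_Rstar_poly N 2 x \<longrightarrow> S_Rstar N x) \<and>
       (S_R_poly N 2 x \<longrightarrow> S_Rstar_poly N 2 x) \<and> (S_Rstar_poly N 2 x \<longrightarrow> Sbar_Rstar N x) \<and>
       (Sbar_R N x \<longrightarrow> Sbar_Rstar N x) \<and> (S_R N x \<longrightarrow> S_Rstar N x)"
    unfolding defs
    using comm_half[of N x] halfcomm_vanish_anti[of N x] halfcomm_halfanti_vanish[of N x]
      comm_anti_vanish[of N x] vanish_anti[of N x] vanish12[of N x] anti_halfanti[of N x]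
      anti_half[of N x]
    by blast
qed

end
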